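(* Let $y(\tau_s)=(q_s,v_s,t_s)\in\mathbb{R}^{n_q}\times\mathbb{R}^{n_q}\times\mathbb{R}$ be given such that $f_c(q_s)=0$ and $n(q_s)^\top v_s\le 0$. Then the ordinary differential equation $$y'=f_{\mathrm{aux,n}}(y):=\begin{bmatrix}\mathbf{0}_{n_q,1}\\ M(q)^{-1}n(q)\,a_{\mathrm{n}}\\ 0\end{bmatrix},$$ with a constant $a_{\mathrm{n}}>0$, is an auxiliary dynamical system (in the sense defined in the context), with jump duration $$\tau_{\mathrm{jump}}=-\frac{n(q_s)^\top v_s}{D(q_s)\,a_{\mathrm{n}}}.$$
   Context: Let $f_c:\mathbb{R}^{n_q}\to\mathbb{R}$ and $M:\mathbb{R}^{n_q}\to\mathbb{R}^{n_q\times n_q}$ be at least twice continuously differentiable, with $M(q)$ symmetric positive definite for all $q$. Let $n(q):=\nabla_q f_c(q)$ and $D(q):=n(q)^\top M(q)^{-1}n(q)$. The state is $y=(q,v,t)\in\mathbb{R}^{n_q}\times\mathbb{R}^{n_q}\times\mathbb{R}$ ($q$ position, $v$ velocity, $t$ clock state / physical time), evolving in numerical time $\tau$, with $y'=\mathrm{d}y/\mathrm{d}\tau$. An auxiliary dynamical system $y'(\tau)=f_{\mathrm{aux,n}}(y(\tau))$ is one that satisfies, for every initial value $y(\tau_s)=(q_s,v_s,t_s)$ with $f_c(q_s)=0$ and $n(q_s)^\top v_s<0$, on a well-defined finite time interval $(\tau_s,\tau_r)$ of length $\tau_{\mathrm{jump}}=\tau_r-\tau_s$, the properties: (i) $f_c(q(\tau))\le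 0$ and $t'(\tau)=0$ for all $\tau\in(\tau_s,\tau_r)$; (ii) $n(q(\tau_r))^\top v(\tau_r)=0$; (iii) $f_c(q(\tau_r))=0$. *)

theory Defs
  imports "HOL-Analysis.Analysis"
begin

definition C2_on_UNIV :: "('a::real_normed_vector \<Rightarrow> 'b::real_normed_vector) \<Rightarrow> bool" where
  "C2_on_UNIV f \<longleftrightarrow> (\<exists>(f' :: 'a \<Rightarrow> 'a \<Rightarrow>\<^sub>L 'b) (f'' :: 'a \<Rightarrow> 'a \<Rightarrow>\<^sub>L ('a \<Rightarrow>\<^sub>L 'b)).
      (\<forall>x. (f has_derivative blinfun_apply (f' x)) (at x)) \<and>
      (\<forall>x. (f' has_derivative blinfun_apply (f'' x)) (at x)) \<and>
      continuous_on UNIV f'')"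

definition f_aux_n ::
  "(real^'n \<Rightarrow> real^'n^'n) \<Rightarrow> (real^'n \<Rightarrow> real^'n) \<Rightarrow> real
     \<Rightarrow> (real^'n) \<times> (real^'n) \<times> real \<Rightarrow> (real^'n) \<times> (real^'n) \<times> real" where
  "f_aux_n M ngrad a_n y =
     (let q = fst y in (0, a_n *\<^sub>R (matrix_inv (M q) *v ngrad q), 0))"

definition is_solution ::
  "('s::real_normed_vector \<Rightarrow> 's) \<Rightarrow> real \<Rightarrow> real \<Rightarrow> 's \<Rightarrow> (real \<Rightarrow> 's) \<Rightarrow> bool" where
  "is_solution f tau_s tau_r ys y \<longleftrightarrow> y tau_s = ys \<and>
     (\<forall>tau\<in>{tau_s..tau_r}. (y has_vector_derivative f (y tau)) (at tau within {tau_s..tau_r}))"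

text \<open>The auxiliary-dynamical-system properties (i)--(iii) for the initial value ys
  at numerical time tau_s, with jump duration tau_jump (so tau_r = tau_s + tau_jump):
  the interval is well defined (a solution exists on it) and every solution satisfies
  (i)--(iii).\<close>
definition aux_system_from ::
  "((real^'n) \<times> (real^'n) \<times> real \<Rightarrow> (real^'n) \<times> (real^'n) \<times> real) \<Rightarrow> (real^'n \<Rightarrow> real)
     \<Rightarrow> (real^'n \<Rightarrow> real^'n) \<Rightarrow> real \<Rightarrow> (real^'n) \<times> (real^'n) \<times> real \<Rightarrow> real \<Rightarrow> bool" where
  "aux_system_from f fc ngrad tau_s ys tau_jump \<longleftrightarrow>
     (let tau_r = tau_s + tau_jump in
       0 \<le> tau_jump \<and>
       (\<exists>y. is_solution f tau_s tau_r ys y) \<and>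
       (\<forall>y. is_solution f tau_s tau_r ys y \<longrightarrow>
          (\<forall>tau\<in>{tau_s<..<tau_r}. fc (fst (y tau)) \<le> 0 \<and>
               ((\<lambda>s. snd (snd (y s))) has_real_derivative 0) (at tau)) \<and>
          ngrad (fst (y tau_r)) \<bullet> fst (snd (y tau_r)) = 0 \<and>
          fc (fst (y tau_r)) = 0))"

end

theory Submission
  imports Defs
begin

lemma pd_inv_pos:
  fixes A :: "real^'n^'n" and n :: "real^'n"
  assumes pd: "\<And>x. x \<noteq> 0 \<Longrightarrow> x \<bullet> (A *v x) > 0" and nz: "n \<noteq> 0"
  shows "n \<bullet> (matrix_inv A *v n) > 0"
proof -
  have "\<forall>x. A *v x = 0 \<longrightarrow> x = 0"
    using pd by (metis inner_zero_right less_irrefl)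
  then have "\<exists>B. B ** A = mat 1" using matrix_left_invertible_ker by blast
  then have "invertible A" using invertible_left_inverse by blast
  then have "A ** matrix_inv A = mat 1"
    unfolding invertible_def matrix_inv_def by (rule someI_ex[where P="\<lambda>A'. A ** A' = mat 1 \<and> A' ** A = mat 1", THEN conjunct1])
  define w where "w = matrix_inv A *v n"
  have Aw: "A *v w = n" unfolding w_def
    by (simp add: matrix_vector_mul_assoc \<open>A ** matrix_inv A = mat 1\<close>)
  have "w \<noteq> 0" using Aw nz by auto
  then have "w \<bullet> (A *v w) > 0" using pd by blast
  then show ?thesis using Aw by (simp add: w_def inner_commute)
qed

theorem proposition1:
  fixes fc :: "real^'n \<Rightarrow> real"
    and M :: "real^'n \<Rightarrow> real^'n^'n"
    and ngrad :: "real^'n \<Rightarrow> real^'n"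
    and a_n tau_s t_s :: real
    and q_s v_s :: "real^'n"
  assumes fc_C2: "C2_on_UNIV fc"
    and M_C2: "C2_on_UNIV M"
    and M_sym: "\<And>q. transpose (M q) = M q"
    and M_pd: "\<And>q x. x \<noteq> 0 \<Longrightarrow> x \<bullet> (M q *v x) > 0"
    and ngrad_def: "\<And>q. (fc has_derivative (\<lambda>h. ngrad q \<bullet> h)) (at q)"
    and a_pos: "a_n > 0"
    and on_surf: "fc q_s = 0"
    and approach: "ngrad q_s \<bullet> v_s \<le> 0"
  shows "aux_system_from (f_aux_n M ngrad a_n) fc ngrad tau_s (q_s, v_s, t_s)
           (- (ngrad q_s \<bullet> v_s) / ((ngrad q_s \<bullet> (matrix_inv (M q_s) *v ngrad q_s)) * a_n))"
proof -
  define n where "n = ngrad q_s"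
  define D where "D = n \<bullet> (matrix_inv (M q_s) *v n)"
  define c where "c = a_n *\<^sub>R (matrix_inv (M q_s) *v n)"
  define J where "J = - (n \<bullet> v_s) / (D * a_n)"
  define tr where "tr = tau_s + J"
  have nc: "n \<bullet> c = a_n * D" unfolding c_def D_def by (simp add: inner_scaleR_right)
  have Dnn: "D \<ge> 0"
    using pd_inv_pos[of "M q_s" n] M_pd unfolding D_def by (cases "n = 0") force+
  have J0: "0 \<le> J" unfolding J_def using Dnn a_pos approach n_def
    by (simp add: divide_nonneg_pos divide_nonpos_nonneg mult_nonneg_nonneg)
  have key: "n \<bullet> v_s + J * (n \<bullet> c) = 0"
  proof (cases "n = 0")
    case True then show ?thesis by simp
  next
    case False
    then have "D > 0" using pd_inv_pos[of "M q_s" n] M_pd unfolding D_def by blast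
    then show ?thesis unfolding nc J_def using a_pos by (simp add: field_simps)
  qed
  have fq: "\<And>q v t. f_aux_n M ngrad a_n (q, v, t) = (0, a_n *\<^sub>R (matrix_inv (M q) *v ngrad q), 0)"
    by (simp add: f_aux_n_def)
  have ex: "is_solution (f_aux_n M ngrad a_n) tau_s tr (q_s, v_s, t_s)
              (\<lambda>tau. (q_s, v_s + (tau - tau_s) *\<^sub>R c, t_s))"
    unfolding is_solution_def fq
    by (auto simp: c_def n_def intro!: derivative_eq_intros)
  have all: "(\<forall>tau\<in>{tau_s<..<tr}. fc (fst (y tau)) \<le> 0 \<and>
               ((\<lambda>s. snd (snd (y s))) has_real_derivative 0) (at tau)) \<and>
          n \<bullet> fst (snd (y tr)) = 0 \<and> fc (fst (y tr)) = 0 \<and> fst (y tr) = q_s"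
    if sol: "is_solution (f_aux_n M ngrad a_n) tau_s tr (q_s, v_s, t_s) y" for y
  proof -
    let ?I = "{tau_s..tr}"
    have y0: "y tau_s = (q_s, v_s, t_s)" and
      yd: "\<And>tau. tau \<in> ?I \<Longrightarrow> (y has_vector_derivative f_aux_n M ngrad a_n (y tau)) (at tau within ?I)"
      using sol unfolding is_solution_def by auto
    have yd': "((\<lambda>s. fst (y s)) has_vector_derivative 0) (at tau within ?I)
      \<and> ((\<lambda>s. fst (snd (y s))) has_vector_derivative a_n *\<^sub>R (matrix_inv (M (fst (y tau))) *v ngrad (fst (y tau)))) (at tau within ?I)
      \<and> ((\<lambda>s. snd (snd (y s))) has_vector_derivative 0) (at tau within ?I)"
      if "tau \<in> ?I" for tau
    proof -
      obtain q v t where e: "y tau = (q, v, t)" by (metis prod_cases3)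
      have d: "(y has_vector_derivative (0, a_n *\<^sub>R (matrix_inv (M q) *v ngrad q), 0)) (at tau within ?I)"
        using yd[OF that] e fq by simp
      have 1: "((\<lambda>s. fst (y s)) has_vector_derivative 0) (at tau within ?I)"
        using bounded_linear.has_vector_derivative[OF bounded_linear_fst d] by simp
      have 2: "((\<lambda>s. fst (snd (y s))) has_vector_derivative a_n *\<^sub>R (matrix_inv (M q) *v ngrad q)) (at tau within ?I)"
        using bounded_linear.has_vector_derivative[OF bounded_linear_compose[OF bounded_linear_fst bounded_linear_snd] d] by simp
      have 3: "((\<lambda>s. snd (snd (y s))) has_vector_derivative 0) (at tau within ?I)"
        using bounded_linear.has_vector_derivative[OF bounded_linear_compose[OF bounded_linear_snd bounded_linear_snd] d] by simp
      show ?thesis using 1 2 3 e by simp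
    qed
    obtain q0 where q0: "\<And>tau. tau \<in> ?I \<Longrightarrow> fst (y tau) = q0"
      using has_vector_derivative_zero_constant[of ?I "\<lambda>s. fst (y s)"] yd' by blast
    have ts: "tau_s \<in> ?I" using J0 tr_def by simp
    have trI: "tr \<in> ?I" using J0 tr_def by simp
    have qc: "\<And>tau. tau \<in> ?I \<Longrightarrow> fst (y tau) = q_s" using q0 ts y0 by (metis fst_conv)
    have vd: "((\<lambda>s. fst (snd (y s)) - (s - tau_s) *\<^sub>R c) has_vector_derivative 0) (at tau within ?I)"
      if "tau \<in> ?I" for tau
    proof -
      have "((\<lambda>s. fst (snd (y s))) has_vector_derivative c) (at tau within ?I)"
        using yd'[OF that] qc[OF that] by (simp add: c_def n_def)
      then show ?thesis by (auto intro!: derivative_eq_intros)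
    qed
    obtain v0 where v0: "\<And>tau. tau \<in> ?I \<Longrightarrow> fst (snd (y tau)) - (tau - tau_s) *\<^sub>R c = v0"
      using has_vector_derivative_zero_constant[of ?I, OF _ vd] by blast
    have "v0 = v_s" using v0[OF ts] y0 by simp
    then have vtr: "fst (snd (y tr)) = v_s + J *\<^sub>R c" using v0[OF trI] tr_def by (simp add: algebra_simps)
    have A: "fc (fst (y tau)) \<le> 0 \<and> ((\<lambda>s. snd (snd (y s))) has_real_derivative 0) (at tau)"
      if "tau \<in> {tau_s<..<tr}" for tau
    proof
      show "fc (fst (y tau)) \<le> 0" using qc[of tau] that on_surf by simp
      have "tau \<in> interior ?I" using that by simp
      then have "at tau within ?I = at tau" by (rule at_within_interior)
      then show "((\<lambda>s. snd (snd (y s))) has_real_derivative 0) (at tau)"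
        using yd'[of tau] that by (simp add: has_real_derivative_iff_has_vector_derivative)
    qed
    show ?thesis using A vtr key qc[OF trI] on_surf by (simp add: inner_add_right)
  qed
  have "0 \<le> J \<and> (\<exists>y. is_solution (f_aux_n M ngrad a_n) tau_s tr (q_s, v_s, t_s) y) \<and>
       (\<forall>y. is_solution (f_aux_n M ngrad a_n) tau_s tr (q_s, v_s, t_s) y \<longrightarrow>
          (\<forall>tau\<in>{tau_s<..<tr}. fc (fst (y tau)) \<le> 0 \<and>
               ((\<lambda>s. snd (snd (y s))) has_real_derivative 0) (at tau)) \<and>
          ngrad (fst (y tr)) \<bullet> fst (snd (y tr)) = 0 \<and>
          fc (fst (y tr)) = 0)"
  proof (intro conjI allI impI)
    fix y assume "is_solution (f_aux_n M ngrad a_n) tau_s tr (q_s, v_s, t_s) y"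
    note h = all[OF this]
    show "\<forall>tau\<in>{tau_s<..<tr}. fc (fst (y tau)) \<le> 0 \<and>
               ((\<lambda>s. snd (snd (y s))) has_real_derivative 0) (at tau)" using h by blast
    show "ngrad (fst (y tr)) \<bullet> fst (snd (y tr)) = 0" using h n_def by simp
    show "fc (fst (y tr)) = 0" using h by blast
  qed (use J0 ex in blast)+
  then show ?thesis unfolding aux_system_from_def Let_def tr_def J_def D_def n_def .
qed

end
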